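(* Let $G$ be a finite group, $\alpha \in \mathbb{Z}_{\geq 0}$, and let $K(G,\alpha)$ be the near-group fusion ring. All irreducible NIM-reps $(A,M)$ over $K(G,\alpha)$ whose basis $M$ consists of exactly two $G$-orbits, $M=\{m^1_k\}_{1\leq k\leq |G:H_1|}\cup\{m^2_k\}_{1\leq k\leq |G:H_2|}$ with the orbits governed by subgroups $H_1,H_2\subseteq G$, are parametrised by tuples $(H_1,H_2,c_{1,1},c_{2,2})$, where $H_1,H_2\subseteq G$ are subgroups and $c_{1,1},c_{2,2}\in \mathbb{Z}_{\geq0}$, satisfying the conditions \begin{itemize} \item $\alpha = c_{1,1}|G:H_1| + c_{2,2}|G:H_2|$, \item $|G|$ divides $|H_1||H_2|$, and \item $\frac{|H_1||H_2|}{|G|}+ c_{1,1}c_{2,2}$ is a square number. \end{itemize} For such a tuple, the action of the non-invertible element $X$ is given by \begin{align*} X \vartriangleright m^1_i &= c_{1,1}\sum_{k=1}^{|G:H_1|}m^1_k + \sqrt{\tfrac{|H_1||H_2|}{|G|} + c_{1,1}c_{2,2}}\sum_{k=1}^{|G:H_2|}m^2_k,\\ X \vartriangleright m^2_i &= \sqrt{\tfrac{|H_1||H_2|}{|G|} + c_{1,1}c_{2,2}}\sum_{k=1}^{|G:H_1|}m^1_k + c_{2,2}\sum_{k=1}^{|G:H_2|}m^2_k, \end{align*} i.e. $c_{1,2}=c_{2,1}=\sqrt{\frac{|H_1||H_2|}{|G|} + c_{1,1}c_{2,2}}$.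
   Context: The near-group fusion ring $K(G,\alpha)$ is the integer span of $G\cup\{X\}$, with group elements multiplying by the group operation, $Xg=gX=X$ for $g\in G$, $X^2=\sum_{g\in G} g+\alpha X$, and $X^*=X$. A NIM-rep is a $\mathbb{Z}_+$-module $(A,M)$ over the fusion ring with symmetric bilinear form $(m_l,m_k)=\delta_{l,k}$ satisfying $(b\vartriangleright m_l,m_k)=(m_l,b^*\vartriangleright m_k)$. The group elements act on the basis $M$ by a $G$-action, partitioning $M$ into $G$-orbits, each isomorphic to a left coset set $G/H_i$ for a subgroup $H_i$. For orbit labels $i,j$, $c_{i,j}:=(X\vartriangleright m^i_l,m^j_k)$, which is independent of $l,k$ and symmetric in $i,j$, so that $X\vartriangleright m^i_l=\sum_j c_{i,j}\sum_k m^j_k$. *)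

theory Defs
  imports "HOL-Algebra.Algebra"
begin

text \<open>A NIM-rep over the near-group fusion ring K(G,alpha) with (finite, orthonormal) basis M.
  The group elements act by the G-action phi on M (a permutation action, hence automatically
  compatible with the form since g* = g^-1). The action of X is encoded by its matrix
  N m m' = (X |> m, m'), a non-negative integer.  The axioms are:
  X* = X (symmetry), X g = X, g X = X and X^2 = sum_g g + alpha X.\<close>

definition near_group_nimrep ::
  "('a, 'b) monoid_scheme \<Rightarrow> nat \<Rightarrow> 'm set \<Rightarrow> ('a \<Rightarrow> 'm \<Rightarrow> 'm) \<Rightarrow> ('m \<Rightarrow> 'm \<Rightarrow> nat) \<Rightarrow> bool"
  where "near_group_nimrep G \<alpha> M \<phi> N \<longleftrightarrow>
     finite M \<and> group_action G M \<phi> \<and>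
     (\<forall>m\<in>M. \<forall>m'\<in>M. N m m' = N m' m) \<and>
     (\<forall>g\<in>carrier G. \<forall>m\<in>M. \<forall>m'\<in>M. N (\<phi> g m) m' = N m m') \<and>
     (\<forall>g\<in>carrier G. \<forall>m\<in>M. \<forall>m'\<in>M. N m (\<phi> (inv\<^bsub>G\<^esub> g) m') = N m m') \<and>
     (\<forall>m\<in>M. \<forall>m''\<in>M.
        (\<Sum>m'\<in>M. N m m' * N m' m'') = card {g \<in> carrier G. \<phi> g m = m''} + \<alpha> * N m m'')"

definition nimrep_irreducible ::
  "('a, 'b) monoid_scheme \<Rightarrow> 'm set \<Rightarrow> ('a \<Rightarrow> 'm \<Rightarrow> 'm) \<Rightarrow> ('m \<Rightarrow> 'm \<Rightarrow> nat) \<Rightarrow> bool"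
  where "nimrep_irreducible G M \<phi> N \<longleftrightarrow> M \<noteq> {} \<and>
     (\<forall>S. S \<subseteq> M \<and> S \<noteq> {} \<and> (\<forall>g\<in>carrier G. \<forall>m\<in>S. \<phi> g m \<in> S) \<and>
          (\<forall>m\<in>S. \<forall>m'\<in>M. N m m' \<noteq> 0 \<longrightarrow> m' \<in> S) \<longrightarrow> S = M)"

definition two_orbit_conditions ::
  "('a, 'b) monoid_scheme \<Rightarrow> nat \<Rightarrow> 'a set \<Rightarrow> 'a set \<Rightarrow> nat \<Rightarrow> nat \<Rightarrow> bool"
  where "two_orbit_conditions G \<alpha> H1 H2 c11 c22 \<longleftrightarrow>
     \<alpha> = c11 * (order G div card H1) + c22 * (order G div card H2) \<and>
     order G dvd card H1 * card H2 \<and>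
     (\<exists>s::nat. s\<^sup>2 = card H1 * card H2 div order G + c11 * c22)"

definition two_orbit_X_action ::
  "('a, 'b) monoid_scheme \<Rightarrow> ('a \<Rightarrow> 'm \<Rightarrow> 'm) \<Rightarrow> ('m \<Rightarrow> 'm \<Rightarrow> nat) \<Rightarrow> 'm \<Rightarrow> 'm \<Rightarrow> nat \<Rightarrow> nat \<Rightarrow> bool"
  where "two_orbit_X_action G \<phi> N m1 m2 c11 c22 \<longleftrightarrow>
     (let O1 = orbit G \<phi> m1; O2 = orbit G \<phi> m2;
          c12 = N m1 m2 in
      c12\<^sup>2 = card (stabilizer G \<phi> m1) * card (stabilizer G \<phi> m2) div order G + c11 * c22 \<and>
      (\<forall>m\<in>O1. \<forall>m'\<in>O1. N m m' = c11) \<and>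
      (\<forall>m\<in>O2. \<forall>m'\<in>O2. N m m' = c22) \<and>
      (\<forall>m\<in>O1. \<forall>m'\<in>O2. N m m' = c12 \<and> N m' m = c12))"

end

theory Submission
  imports Defs
begin


lemma group_actionI:
  fixes G (structure)
  assumes grp: "group G"
    and ext: "\<And>g. g \<in> carrier G \<Longrightarrow> \<psi> g \<in> extensional E"
    and cl: "\<And>g x. g \<in> carrier G \<Longrightarrow> x \<in> E \<Longrightarrow> \<psi> g x \<in> E"
    and mult: "\<And>g h x. g \<in> carrier G \<Longrightarrow> h \<in> carrier G \<Longrightarrow> x \<in> E \<Longrightarrow> \<psi> (g \<otimes>\<^bsub>G\<^esub> h) x = \<psi> g (\<psi> h x)"
    and one: "\<And>x. x \<in> E \<Longrightarrow> \<psi> \<one>\<^bsub>G\<^esub> x = x"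
  shows "group_action G E \<psi>"
proof -
  interpret group G by (rule grp)
  have inv1: "\<psi> (inv g) (\<psi> g x) = x" if "g \<in> carrier G" "x \<in> E" for g x
    using mult[of "inv g" g x] that one by simp
  have inv2: "\<psi> g (\<psi> (inv g) x) = x" if "g \<in> carrier G" "x \<in> E" for g x
    using mult[of g "inv g" x] that one by simp
  have bij: "\<psi> g \<in> Bij E" if g: "g \<in> carrier G" for g
  proof -
    have "inj_on (\<psi> g) E"
      by (metis g inj_onI inv1)
    moreover have "\<psi> g ` E = E"
    proof
      show "\<psi> g ` E \<subseteq> E" using cl g by auto
      show "E \<subseteq> \<psi> g ` E"
      proof
        fix x assume "x \<in> E"
        then have "x = \<psi> g (\<psi> (inv g) x)" using inv2 g by simp
        then show "x \<in> \<psi> g ` E" using cl[of "inv g" x] g \<open>x \<in> E\<close> by auto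
      qed
    qed
    ultimately show ?thesis unfolding Bij_def bij_betw_def using ext g by auto
  qed
  show ?thesis
    unfolding group_action_def group_hom_def group_hom_axioms_def
  proof (intro conjI)
    show "group G" by (rule grp)
    show "group (BijGroup E)" by (rule group_BijGroup)
    show "\<psi> \<in> hom G (BijGroup E)"
    proof (rule homI)
      fix g assume "g \<in> carrier G"
      then show "\<psi> g \<in> carrier (BijGroup E)" using bij by (simp add: BijGroup_def)
    next
      fix g h assume g: "g \<in> carrier G" and h: "h \<in> carrier G"
      have "\<psi> (g \<otimes> h) = compose E (\<psi> g) (\<psi> h)"
      proof
        fix x show "\<psi> (g \<otimes> h) x = compose E (\<psi> g) (\<psi> h) x"
        proof (cases "x \<in> E")
          case True then show ?thesis using mult g h by (simp add: compose_def)
        next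
          case False
          then show ?thesis using ext[of "g \<otimes> h"] g h
            by (simp add: compose_def extensional_def)
        qed
      qed
      then show "\<psi> (g \<otimes> h) = \<psi> g \<otimes>\<^bsub>BijGroup E\<^esub> \<psi> h"
        using bij g h by (simp add: BijGroup_def)
    qed
  qed
qed

lemma (in group_action) orbit_closed:
  assumes "a \<in> E" "x \<in> orbit G \<phi> a" "g \<in> carrier G"
  shows "\<phi> g x \<in> orbit G \<phi> a"
proof -
  interpret group G using group_hom group_hom.axioms(1) by auto
  obtain k where k: "k \<in> carrier G" "x = \<phi> k a" using assms(2) by (auto simp: orbit_def)
  then have "\<phi> g x = \<phi> (g \<otimes> k) a" using composition_rule assms by simp
  then show ?thesis using k assms unfolding orbit_def by auto
qed

lemma (in group_action) orbit_subset:
  assumes "a \<in> E" shows "orbit G \<phi> a \<subseteq> E"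
  using assms element_image unfolding orbit_def by auto

lemma (in group_action) orbit_eq:
  assumes "a \<in> E" "m \<in> orbit G \<phi> a"
  shows "orbit G \<phi> m = orbit G \<phi> a"
proof -
  have mE: "m \<in> E" using orbit_subset assms by auto
  show ?thesis
  proof
    show "orbit G \<phi> m \<subseteq> orbit G \<phi> a"
      using orbit_trans[of a m] assms mE orbit_subset[OF mE] by blast
    show "orbit G \<phi> a \<subseteq> orbit G \<phi> m"
    proof
      fix y assume y: "y \<in> orbit G \<phi> a"
      have "a \<in> orbit G \<phi> m" using orbit_sym assms mE by blast
      then show "y \<in> orbit G \<phi> m"
        using orbit_trans[of m a y] y assms mE orbit_subset[OF assms(1)] by blast
    qed
  qed
qed

lemma (in group_action) card_transporter:
  assumes "m \<in> E" "m'' \<in> orbit G \<phi> m"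
  shows "card {g \<in> carrier G. \<phi> g m = m''} = card (stabilizer G \<phi> m)"
proof -
  interpret group G using group_hom group_hom.axioms(1) by auto
  obtain k where k: "k \<in> carrier G" "\<phi> k m = m''" using assms(2) by (auto simp: orbit_def)
  have "{g \<in> carrier G. \<phi> g m = m''} = (\<lambda>g. k \<otimes> g) ` stabilizer G \<phi> m"
  proof
    show "(\<lambda>g. k \<otimes> g) ` stabilizer G \<phi> m \<subseteq> {g \<in> carrier G. \<phi> g m = m''}"
      using k composition_rule assms(1) by (auto simp: stabilizer_def)
    show "{g \<in> carrier G. \<phi> g m = m''} \<subseteq> (\<lambda>g. k \<otimes> g) ` stabilizer G \<phi> m"
    proof
      fix g assume g: "g \<in> {g \<in> carrier G. \<phi> g m = m''}"
      have "\<phi> (inv k \<otimes> g) m = \<phi> (inv k) m''" using g k composition_rule assms(1) by auto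
      also have "\<dots> = m" using orbit_sym_aux k assms(1) by blast
      finally have "inv k \<otimes> g \<in> stabilizer G \<phi> m" using g k by (auto simp: stabilizer_def)
      moreover have "g = k \<otimes> (inv k \<otimes> g)" using g k by (simp add: m_assoc[symmetric])
      ultimately show "g \<in> (\<lambda>g. k \<otimes> g) ` stabilizer G \<phi> m" by blast
    qed
  qed
  moreover have "inj_on (\<lambda>g. k \<otimes> g) (stabilizer G \<phi> m)"
    by (rule inj_onI) (metis k l_cancel stabilizer_subset subsetD)
  ultimately show ?thesis by (simp add: card_image)
qed

lemma (in group_action) card_stab_orbit:
  assumes "finite (carrier G)" "a \<in> E"
  shows "card (stabilizer G \<phi> a) > 0" "card (orbit G \<phi> a) * card (stabilizer G \<phi> a) = order G"
proof -
  show "card (stabilizer G \<phi> a) > 0"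
    using stabilizer_one_closed[OF assms(2)] stabilizer_subset assms(1)
    by (metis card_gt_0_iff empty_iff finite_subset)
  show "card (orbit G \<phi> a) * card (stabilizer G \<phi> a) = order G"
    by (rule orbit_stabilizer_theorem[OF assms(2)])
qed

lemma N_const:
  fixes G (structure)
  assumes ga: "group_action G M \<phi>" and grp: "group G"
    and inv1: "\<forall>g\<in>carrier G. \<forall>m\<in>M. \<forall>m'\<in>M. N (\<phi> g m) m' = N m m'"
    and inv2: "\<forall>g\<in>carrier G. \<forall>m\<in>M. \<forall>m'\<in>M. N m (\<phi> (inv\<^bsub>G\<^esub> g) m') = N m m'"
    and a: "a \<in> M" and b: "b \<in> M" and x: "x \<in> orbit G \<phi> a" and y: "y \<in> orbit G \<phi> b"
  shows "N x y = N a b"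
proof -
  interpret group_action G M \<phi> by (rule ga)
  interpret group G by (rule grp)
  obtain g where g: "g \<in> carrier G" "x = \<phi> g a" using x by (auto simp: orbit_def)
  obtain k where k: "k \<in> carrier G" "y = \<phi> k b" using y by (auto simp: orbit_def)
  have yM: "y \<in> M" using orbit_subset[OF b] y by auto
  have "N x y = N a y" using inv1 g a yM by auto
  also have "\<dots> = N a (\<phi> (inv (inv k)) b)" using k by simp
  also have "\<dots> = N a b" by (rule inv2[rule_format, OF inv_closed[OF k(1)] a b])
  finally show ?thesis .
qed

lemma sum_two_orbits:
  assumes "finite M" "M = O1 \<union> O2" "O1 \<inter> O2 = {}"
    and "\<And>x. x \<in> O1 \<Longrightarrow> f x = c1" "\<And>x. x \<in> O2 \<Longrightarrow> f x = c2"
  shows "(\<Sum>x\<in>M. f x) = card O1 * c1 + card O2 * c2"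
proof -
  have "(\<Sum>x\<in>M. f x) = (\<Sum>x\<in>O1. f x) + (\<Sum>x\<in>O2. f x)"
    using assms(1-3) by (simp add: sum.union_disjoint)
  also have "\<dots> = (\<Sum>x\<in>O1. c1) + (\<Sum>x\<in>O2. c2)"
    using assms(4,5) by simp
  finally show ?thesis by simp
qed

lemma forward:
  assumes grp: "group G" and fin: "finite (carrier G)"
    and nim: "near_group_nimrep G \<alpha> M \<phi> N" and irr: "nimrep_irreducible G M \<phi> N"
    and c2: "card (orbits G M \<phi>) = 2"
    and m1: "m1 \<in> M" and m2: "m2 \<in> M" and neq: "orbit G \<phi> m1 \<noteq> orbit G \<phi> m2"
  shows "subgroup (stabilizer G \<phi> m1) G \<and> subgroup (stabilizer G \<phi> m2) G \<and>
           two_orbit_conditions G \<alpha> (stabilizer G \<phi> m1) (stabilizer G \<phi> m2) (N m1 m1) (N m2 m2) \<and>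
           two_orbit_X_action G \<phi> N m1 m2 (N m1 m1) (N m2 m2)"
proof -
  have finM: "finite M" and ga: "group_action G M \<phi>"
    and sym: "\<forall>m\<in>M. \<forall>m'\<in>M. N m m' = N m' m"
    and inv1: "\<forall>g\<in>carrier G. \<forall>m\<in>M. \<forall>m'\<in>M. N (\<phi> g m) m' = N m m'"
    and inv2: "\<forall>g\<in>carrier G. \<forall>m\<in>M. \<forall>m'\<in>M. N m (\<phi> (inv\<^bsub>G\<^esub> g) m') = N m m'"
    and sq: "\<forall>m\<in>M. \<forall>m''\<in>M.
        (\<Sum>m'\<in>M. N m m' * N m' m'') = card {g \<in> carrier G. \<phi> g m = m''} + \<alpha> * N m m''"
    using nim unfolding near_group_nimrep_def by auto
  interpret group_action G M \<phi> by (rule ga)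
  interpret group G by (rule grp)
  define O1 where "O1 = orbit G \<phi> m1"
  define O2 where "O2 = orbit G \<phi> m2"
  have O1o: "O1 \<in> orbits G M \<phi>" and O2o: "O2 \<in> orbits G M \<phi>"
    using m1 m2 unfolding O1_def O2_def orbits_def by auto
  have finO: "finite (orbits G M \<phi>)" using c2 card.infinite by fastforce
  have orbs: "orbits G M \<phi> = {O1, O2}"
  proof -
    have "{O1, O2} \<subseteq> orbits G M \<phi>" using O1o O2o by auto
    moreover have "card {O1, O2} = 2" using neq O1_def O2_def by simp
    ultimately show ?thesis using finO c2 by (metis card_subset_eq)
  qed
  have Mun: "M = O1 \<union> O2" using orbits_coverture orbs by auto
  have disj: "O1 \<inter> O2 = {}" using disjoint_union[OF O1o O2o] neq O1_def O2_def by auto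
  have m1O1: "m1 \<in> O1" and m2O2: "m2 \<in> O2" using orbit_refl m1 m2 O1_def O2_def by auto
  have m2nO1: "m2 \<notin> O1" using disj m2O2 by auto
  have cst: "N x y = N a b" if "a \<in> M" "b \<in> M" "x \<in> orbit G \<phi> a" "y \<in> orbit G \<phi> b" for a b x y
    using N_const[OF ga grp inv1 inv2 that] .
  define c11 where "c11 = N m1 m1"
  define c12 where "c12 = N m1 m2"
  define c22 where "c22 = N m2 m2"
  have c21: "N m2 m1 = c12" using sym m1 m2 c12_def by auto
  have B11: "N x y = c11" if "x \<in> O1" "y \<in> O1" for x y using cst[OF m1 m1] that O1_def c11_def by auto
  have B12: "N x y = c12" if "x \<in> O1" "y \<in> O2" for x y using cst[OF m1 m2] that O1_def O2_def c12_def by auto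
  have B21: "N x y = c12" if "x \<in> O2" "y \<in> O1" for x y using cst[OF m2 m1] that O1_def O2_def c21 by auto
  have B22: "N x y = c22" if "x \<in> O2" "y \<in> O2" for x y using cst[OF m2 m2] that O2_def c22_def by auto
  define n1 where "n1 = card O1"
  define n2 where "n2 = card O2"
  define h1 where "h1 = card (stabilizer G \<phi> m1)"
  define h2 where "h2 = card (stabilizer G \<phi> m2)"
  have h1p: "h1 > 0" and h2p: "h2 > 0" using card_stab_orbit(1)[OF fin] m1 m2 h1_def h2_def by auto
  have nh1: "n1 * h1 = order G" and nh2: "n2 * h2 = order G"
    using card_stab_orbit(2)[OF fin] m1 m2 h1_def h2_def n1_def n2_def O1_def O2_def by auto
  have S11: "(\<Sum>m'\<in>M. N m1 m' * N m' m1) = n1 * (c11 * c11) + n2 * (c12 * c12)"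
    unfolding n1_def n2_def by (rule sum_two_orbits[OF finM Mun disj]) (use B11 B12 B21 m1O1 n1_def n2_def in auto)
  have S12: "(\<Sum>m'\<in>M. N m1 m' * N m' m2) = n1 * (c11 * c12) + n2 * (c12 * c22)"
    unfolding n1_def n2_def by (rule sum_two_orbits[OF finM Mun disj]) (use B11 B12 B22 m1O1 m2O2 n1_def n2_def in auto)
  have S22: "(\<Sum>m'\<in>M. N m2 m' * N m' m2) = n1 * (c12 * c12) + n2 * (c22 * c22)"
    unfolding n1_def n2_def by (rule sum_two_orbits[OF finM Mun disj]) (use B21 B12 B22 m2O2 n1_def n2_def in auto)
  have T11: "card {g \<in> carrier G. \<phi> g m1 = m1} = h1" unfolding h1_def stabilizer_def by simp
  have T22: "card {g \<in> carrier G. \<phi> g m2 = m2} = h2" unfolding h2_def stabilizer_def by simp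
  have T12: "card {g \<in> carrier G. \<phi> g m1 = m2} = 0"
  proof -
    have "\<forall>g\<in>carrier G. \<phi> g m1 \<noteq> m2" using m2nO1 O1_def by (auto simp: orbit_def)
    then have "{g \<in> carrier G. \<phi> g m1 = m2} = {}" by blast
    then show ?thesis by (simp only: card.empty)
  qed
  have E11: "n1 * (c11 * c11) + n2 * (c12 * c12) = h1 + \<alpha> * c11"
  proof -
    have "(\<Sum>m'\<in>M. N m1 m' * N m' m1) = card {g \<in> carrier G. \<phi> g m1 = m1} + \<alpha> * N m1 m1"
      using sq m1 m1 by blast
    then show ?thesis using S11 T11 c11_def by simp
  qed
  have E12: "n1 * (c11 * c12) + n2 * (c12 * c22) = \<alpha> * c12"
  proof -
    have "(\<Sum>m'\<in>M. N m1 m' * N m' m2) = card {g \<in> carrier G. \<phi> g m1 = m2} + \<alpha> * N m1 m2"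
      using sq m1 m2 by blast
    then show ?thesis using S12 T12 c12_def by simp
  qed
  have E22: "n1 * (c12 * c12) + n2 * (c22 * c22) = h2 + \<alpha> * c22"
  proof -
    have "(\<Sum>m'\<in>M. N m2 m' * N m' m2) = card {g \<in> carrier G. \<phi> g m2 = m2} + \<alpha> * N m2 m2"
      using sq m2 m2 by blast
    then show ?thesis using S22 T22 c22_def by simp
  qed
  have c12p: "c12 \<noteq> 0"
  proof
    assume c0: "c12 = 0"
    have P: "O1 \<subseteq> M \<and> O1 \<noteq> {} \<and> (\<forall>g\<in>carrier G. \<forall>m\<in>O1. \<phi> g m \<in> O1) \<and>
          (\<forall>m\<in>O1. \<forall>m'\<in>M. N m m' \<noteq> 0 \<longrightarrow> m' \<in> O1)"
    proof (intro conjI)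
      show "O1 \<subseteq> M" using Mun by auto
      show "O1 \<noteq> {}" using m1O1 by auto
      show "\<forall>g\<in>carrier G. \<forall>m\<in>O1. \<phi> g m \<in> O1" using orbit_closed m1 O1_def by auto
      show "\<forall>m\<in>O1. \<forall>m'\<in>M. N m m' \<noteq> 0 \<longrightarrow> m' \<in> O1" using B12 c0 Mun by auto
    qed
    have "O1 = M" using irr P unfolding nimrep_irreducible_def by blast
    then show False using m2 m2nO1 by auto
  qed
  have alpha: "\<alpha> = n1 * c11 + n2 * c22"
  proof -
    have "c12 * (n1 * c11 + n2 * c22) = c12 * \<alpha>" using E12 by (simp add: algebra_simps)
    then show ?thesis using c12p by simp
  qed
  have F: "n2 * (c12 * c12) = h1 + n2 * (c11 * c22)"
    using E11 alpha by (simp add: algebra_simps)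
  have ge: "c11 * c22 \<le> c12 * c12"
  proof -
    have "n2 * (c11 * c22) \<le> n2 * (c12 * c12)" using F by simp
    moreover have "n2 > 0" using nh2 h2p fin by (metis mult_0 order_gt_0_iff_finite less_numeral_extra(3) neq0_conv)
    ultimately show ?thesis by simp
  qed
  define d where "d = c12 * c12 - c11 * c22"
  have h1d: "h1 = n2 * d" using F ge unfolding d_def by (simp add: diff_mult_distrib2)
  have Gp: "order G > 0" using fin by (simp add: order_gt_0_iff_finite)
  have hh: "h1 * h2 = order G * d" using h1d nh2 by (metis mult.assoc mult.commute)
  have divd: "h1 * h2 div order G = d" using hh Gp by simp
  have c12sq: "c12\<^sup>2 = h1 * h2 div order G + c11 * c22"
    using divd ge d_def by (simp add: power2_eq_square)
  have dv1: "order G div h1 = n1" using nh1 h1p by (metis nonzero_mult_div_cancel_right neq0_conv)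
  have dv2: "order G div h2 = n2" using nh2 h2p by (metis nonzero_mult_div_cancel_right neq0_conv)
  show ?thesis
  proof (intro conjI)
    show "subgroup (stabilizer G \<phi> m1) G" using stabilizer_subgroup m1 .
    show "subgroup (stabilizer G \<phi> m2) G" using stabilizer_subgroup m2 .
    show "two_orbit_conditions G \<alpha> (stabilizer G \<phi> m1) (stabilizer G \<phi> m2) (N m1 m1) (N m2 m2)"
      unfolding two_orbit_conditions_def
      using alpha dv1 dv2 hh c12sq h1_def h2_def c11_def c22_def
      by (metis dvd_triv_left mult.commute)
    show "two_orbit_X_action G \<phi> N m1 m2 (N m1 m1) (N m2 m2)"
      unfolding two_orbit_X_action_def Let_def
      using c12sq B11 B12 B21 B22 O1_def O2_def h1_def h2_def c11_def c12_def c22_def by auto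
  qed
qed


lemma backward:
  fixes G (structure)
  assumes grp: "group G" and fin: "finite (carrier G)"
    and ga: "group_action G M \<phi>" and finM: "finite M"
    and m1: "m1 \<in> M" and m2: "m2 \<in> M"
    and Mun: "M = orbit G \<phi> m1 \<union> orbit G \<phi> m2"
    and disj: "orbit G \<phi> m1 \<inter> orbit G \<phi> m2 = {}"
    and cond: "two_orbit_conditions G \<alpha> (stabilizer G \<phi> m1) (stabilizer G \<phi> m2) c11 c22"
  shows "\<exists>N. near_group_nimrep G \<alpha> M \<phi> N \<and> nimrep_irreducible G M \<phi> N \<and>
           card (orbits G M \<phi>) = 2 \<and> orbit G \<phi> m1 \<noteq> orbit G \<phi> m2 \<and> N m1 m1 = c11 \<and> N m2 m2 = c22"
proof -
  interpret group_action G M \<phi> by (rule ga)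
  interpret group G by (rule grp)
  define O1 where "O1 = orbit G \<phi> m1"
  define O2 where "O2 = orbit G \<phi> m2"
  define n1 where "n1 = card O1"
  define n2 where "n2 = card O2"
  define h1 where "h1 = card (stabilizer G \<phi> m1)"
  define h2 where "h2 = card (stabilizer G \<phi> m2)"
  define q where "q = h1 * h2 div order G"
  have h1p: "h1 > 0" and h2p: "h2 > 0" using card_stab_orbit(1)[OF fin] m1 m2 h1_def h2_def by auto
  have nh1: "n1 * h1 = order G" and nh2: "n2 * h2 = order G"
    using card_stab_orbit(2)[OF fin] m1 m2 h1_def h2_def n1_def n2_def O1_def O2_def by auto
  have Gp: "order G > 0" using fin by (simp add: order_gt_0_iff_finite)
  have dv1: "order G div h1 = n1" using nh1 h1p by (metis nonzero_mult_div_cancel_right neq0_conv)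
  have dv2: "order G div h2 = n2" using nh2 h2p by (metis nonzero_mult_div_cancel_right neq0_conv)
  obtain s where alpha: "\<alpha> = c11 * n1 + c22 * n2" and dvd: "order G dvd h1 * h2"
    and s: "s\<^sup>2 = q + c11 * c22"
    using cond unfolding two_orbit_conditions_def h1_def[symmetric] h2_def[symmetric]
      q_def[symmetric] dv1 dv2 by blast
  have Gq: "order G * q = h1 * h2" using dvd q_def by simp
  have n2q: "n2 * q = h1"
  proof -
    have "h2 * (n2 * q) = h2 * h1" using Gq nh2 by (metis mult.assoc mult.commute)
    then show ?thesis using h2p by simp
  qed
  have n1q: "n1 * q = h2"
  proof -
    have "h1 * (n1 * q) = h1 * h2" using Gq nh1 by (metis mult.assoc mult.commute)
    then show ?thesis using h1p by simp
  qed
  have qp: "q > 0" using Gq h1p h2p by (metis mult_is_0 neq0_conv)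
  have ss: "s * s = q + c11 * c22" using s by (simp add: power2_eq_square)
  have sp: "s \<noteq> 0"
  proof
    assume "s = 0" then show False using ss qp by simp
  qed
  have m1O1: "m1 \<in> O1" and m2O2: "m2 \<in> O2" using orbit_refl m1 m2 O1_def O2_def by auto
  have m2nO1: "m2 \<notin> O1" using disj m2O2 O1_def O2_def by auto
  have MU: "M = O1 \<union> O2" and DJ: "O1 \<inter> O2 = {}" using Mun disj O1_def O2_def by auto
  have tag: "\<phi> g x \<in> O1 \<longleftrightarrow> x \<in> O1" if "g \<in> carrier G" "x \<in> M" for g x
  proof
    assume "x \<in> O1" then show "\<phi> g x \<in> O1" using orbit_closed m1 that O1_def by auto
  next
    assume a: "\<phi> g x \<in> O1"
    show "x \<in> O1"
    proof (rule ccontr)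
      assume "x \<notin> O1"
      then have "x \<in> O2" using MU that by auto
      then have "\<phi> g x \<in> O2" using orbit_closed m2 that O2_def by auto
      then show False using a DJ by auto
    qed
  qed
  have stabO: "card (stabilizer G \<phi> m) = card (stabilizer G \<phi> a)" if "a \<in> M" "m \<in> orbit G \<phi> a" for a m
  proof -
    have mM: "m \<in> M" using orbit_subset that by auto
    have "card (orbit G \<phi> a) * card (stabilizer G \<phi> m) = order G"
      using card_stab_orbit(2)[OF fin mM] orbit_eq[OF that] by simp
    moreover have "card (orbit G \<phi> a) * card (stabilizer G \<phi> a) = order G"
      using card_stab_orbit(2)[OF fin that(1)] .
    moreover have "card (orbit G \<phi> a) > 0" using Gp calculation by (metis mult_is_0 neq0_conv)
    ultimately show ?thesis by (metis mult_left_cancel neq0_conv)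
  qed
  have trans_same: "card {g \<in> carrier G. \<phi> g m = m''} = card (stabilizer G \<phi> a)"
    if "a \<in> M" "m \<in> orbit G \<phi> a" "m'' \<in> orbit G \<phi> a" for a m m''
  proof -
    have mM: "m \<in> M" using orbit_subset that by auto
    have "m'' \<in> orbit G \<phi> m" using orbit_eq[OF that(1,2)] that(3) by simp
    then show ?thesis using card_transporter[OF mM] stabO[OF that(1,2)] by simp
  qed
  have trans_diff: "card {g \<in> carrier G. \<phi> g m = m''} = 0"
    if "m \<in> M" "m'' \<in> M" "(m \<in> O1) \<noteq> (m'' \<in> O1)" for m m''
  proof -
    have "\<forall>g\<in>carrier G. \<phi> g m \<noteq> m''" using tag that by metis
    then have "{g \<in> carrier G. \<phi> g m = m''} = {}" by blast
    then show ?thesis by (simp only: card.empty)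
  qed
  define N where "N = (\<lambda>x y. if x \<in> O1 then (if y \<in> O1 then c11 else s) else (if y \<in> O1 then s else c22))"
  have nim: "near_group_nimrep G \<alpha> M \<phi> N"
    unfolding near_group_nimrep_def
  proof (intro conjI ballI)
    show "finite M" by (rule finM)
    show "group_action G M \<phi>" by (rule ga)
    fix m m' assume "m \<in> M" "m' \<in> M"
    then show "N m m' = N m' m" unfolding N_def by auto
  next
    fix g m m' assume "g \<in> carrier G" "m \<in> M" "m' \<in> M"
    then show "N (\<phi> g m) m' = N m m'" unfolding N_def using tag by auto
  next
    fix g m m' assume "g \<in> carrier G" "m \<in> M" "m' \<in> M"
    then show "N m (\<phi> (inv g) m') = N m m'" unfolding N_def using tag[of "inv g" m'] by auto
  next
    fix m m'' assume m: "m \<in> M" and m'': "m'' \<in> M"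
    show "(\<Sum>m'\<in>M. N m m' * N m' m'') = card {g \<in> carrier G. \<phi> g m = m''} + \<alpha> * N m m''"
    proof (cases "m \<in> O1")
      case mO1: True
      show ?thesis
      proof (cases "m'' \<in> O1")
        case True
        have "(\<Sum>m'\<in>M. N m m' * N m' m'') = n1 * (c11 * c11) + n2 * (s * s)"
          unfolding n1_def n2_def by (rule sum_two_orbits[OF finM MU DJ]) (use mO1 True DJ in \<open>auto simp: N_def\<close>)
        moreover have "card {g \<in> carrier G. \<phi> g m = m''} = h1"
          using trans_same[OF m1] mO1 True O1_def h1_def by auto
        moreover have "N m m'' = c11" using mO1 True N_def by auto
        moreover have "n2 * (s * s) = h1 + n2 * (c11 * c22)" using ss n2q by (simp add: algebra_simps)
        ultimately show ?thesis using alpha by (simp add: algebra_simps)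
      next
        case False
        have "(\<Sum>m'\<in>M. N m m' * N m' m'') = n1 * (c11 * s) + n2 * (s * c22)"
          unfolding n1_def n2_def by (rule sum_two_orbits[OF finM MU DJ]) (use mO1 False DJ in \<open>auto simp: N_def\<close>)
        moreover have "card {g \<in> carrier G. \<phi> g m = m''} = 0"
          using trans_diff m m'' mO1 False by auto
        moreover have "N m m'' = s" using mO1 False N_def by auto
        ultimately show ?thesis using alpha by (simp add: algebra_simps)
      qed
    next
      case mO2: False
      have mO2': "m \<in> O2" using mO2 m MU by auto
      show ?thesis
      proof (cases "m'' \<in> O1")
        case True
        have "(\<Sum>m'\<in>M. N m m' * N m' m'') = n1 * (s * c11) + n2 * (c22 * s)"
          unfolding n1_def n2_def by (rule sum_two_orbits[OF finM MU DJ]) (use mO2 True DJ in \<open>auto simp: N_def\<close>)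
        moreover have "card {g \<in> carrier G. \<phi> g m = m''} = 0"
          using trans_diff m m'' mO2 True by auto
        moreover have "N m m'' = s" using mO2 True N_def by auto
        ultimately show ?thesis using alpha by (simp add: algebra_simps)
      next
        case False
        have m''O2: "m'' \<in> O2" using False m'' MU by auto
        have "(\<Sum>m'\<in>M. N m m' * N m' m'') = n1 * (s * s) + n2 * (c22 * c22)"
          unfolding n1_def n2_def by (rule sum_two_orbits[OF finM MU DJ]) (use mO2 False DJ in \<open>auto simp: N_def\<close>)
        moreover have "card {g \<in> carrier G. \<phi> g m = m''} = h2"
          using trans_same[OF m2] mO2' m''O2 O2_def h2_def by auto
        moreover have "N m m'' = c22" using mO2 False N_def by auto
        moreover have "n1 * (s * s) = h2 + n1 * (c11 * c22)" using ss n1q by (simp add: algebra_simps)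
        ultimately show ?thesis using alpha by (simp add: algebra_simps)
      qed
    qed
  qed
  have irr: "nimrep_irreducible G M \<phi> N"
    unfolding nimrep_irreducible_def
  proof (intro conjI allI impI)
    show "M \<noteq> {}" using m1 by auto
    fix S assume S: "S \<subseteq> M \<and> S \<noteq> {} \<and> (\<forall>g\<in>carrier G. \<forall>m\<in>S. \<phi> g m \<in> S) \<and>
          (\<forall>m\<in>S. \<forall>m'\<in>M. N m m' \<noteq> 0 \<longrightarrow> m' \<in> S)"
    then obtain m where m: "m \<in> S" by auto
    have cl: "\<And>x y. x \<in> S \<Longrightarrow> y \<in> M \<Longrightarrow> N x y \<noteq> 0 \<Longrightarrow> y \<in> S" using S by blast
    have all2: "O2 \<subseteq> S" if "x \<in> S" "x \<in> O1" for x
    proof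
      fix y assume y: "y \<in> O2"
      then have "y \<notin> O1" "y \<in> M" using DJ MU by auto
      then show "y \<in> S" using cl[OF that(1), of y] that(2) sp unfolding N_def by auto
    qed
    have all1: "O1 \<subseteq> S" if "x \<in> S" "x \<notin> O1" for x
      using cl[OF that(1)] that(2) MU sp unfolding N_def by auto
    have "O1 \<subseteq> S \<and> O2 \<subseteq> S"
    proof (cases "m \<in> O1")
      case True
      then have "O2 \<subseteq> S" using all2 m by auto
      then have "m2 \<in> S" using m2O2 by auto
      then show ?thesis using all1 m2nO1 \<open>O2 \<subseteq> S\<close> by auto
    next
      case False
      then have "O1 \<subseteq> S" using all1 m by auto
      then have "m1 \<in> S" using m1O1 by auto
      then show ?thesis using all2 m1O1 \<open>O1 \<subseteq> S\<close> by auto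
    qed
    then show "S = M" using S MU by auto
  qed
  have neq: "O1 \<noteq> O2" using m1O1 DJ m2O2 m2nO1 by auto
  have orbs: "orbits G M \<phi> = {O1, O2}"
  proof
    show "orbits G M \<phi> \<subseteq> {O1, O2}"
    proof
      fix Y assume "Y \<in> orbits G M \<phi>"
      then obtain x where x: "x \<in> M" "Y = orbit G \<phi> x" by (auto simp: orbits_def)
      then show "Y \<in> {O1, O2}" using orbit_eq[OF m1, of x] orbit_eq[OF m2, of x] MU O1_def O2_def by auto
    qed
    show "{O1, O2} \<subseteq> orbits G M \<phi>" using m1 m2 O1_def O2_def by (auto simp: orbits_def)
  qed
  have "card (orbits G M \<phi>) = 2" using orbs neq by simp
  moreover have "N m1 m1 = c11" "N m2 m2 = c22" using m1O1 m2nO1 N_def by auto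
  ultimately show ?thesis using nim irr neq O1_def O2_def by blast
qed




lemma transport_gset:
  fixes G (structure) and h :: "'x \<Rightarrow> nat"
  assumes grp: "group G" and ga: "group_action G A \<psi>" and inj: "inj_on h A"
  defines "\<phi> \<equiv> \<lambda>g. (\<lambda>y \<in> h ` A. h (\<psi> g (the_inv_into A h y)))"
  shows "group_action G (h ` A) \<phi>"
    and "\<And>a. a \<in> A \<Longrightarrow> orbit G \<phi> (h a) = h ` orbit G \<psi> a"
    and "\<And>a. a \<in> A \<Longrightarrow> stabilizer G \<phi> (h a) = stabilizer G \<psi> a"
proof -
  interpret group_action G A \<psi> by (rule ga)
  interpret group G by (rule grp)
  have phi: "\<phi> g (h a) = h (\<psi> g a)" if "a \<in> A" for g a
    using that inj unfolding \<phi>_def by (simp add: the_inv_into_f_f)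
  show "group_action G (h ` A) \<phi>"
  proof (rule group_actionI[OF grp])
    fix g assume "g \<in> carrier G" then show "\<phi> g \<in> extensional (h ` A)" unfolding \<phi>_def by simp
  next
    fix g x assume "g \<in> carrier G" "x \<in> h ` A"
    then obtain a where a: "a \<in> A" "x = h a" by blast
    then show "\<phi> g x \<in> h ` A" using phi[OF a(1)] element_image[OF \<open>g \<in> carrier G\<close> a(1)] by simp
  next
    fix g k x assume "g \<in> carrier G" "k \<in> carrier G" "x \<in> h ` A"
    then obtain a where a: "a \<in> A" "x = h a" by blast
    have "\<psi> k a \<in> A" using element_image \<open>k \<in> carrier G\<close> a(1) by blast
    then show "\<phi> (g \<otimes> k) x = \<phi> g (\<phi> k x)"
      using phi a composition_rule[OF a(1)] \<open>g \<in> carrier G\<close> \<open>k \<in> carrier G\<close> by simp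
  next
    fix x assume "x \<in> h ` A"
    then obtain a where a: "a \<in> A" "x = h a" by blast
    have "\<psi> \<one> a = a" using a(1) id_eq_one by (metis restrict_apply')
    then show "\<phi> \<one> x = x" using phi[OF a(1)] a(2) by simp
  qed
  show "orbit G \<phi> (h a) = h ` orbit G \<psi> a" if "a \<in> A" for a
    using that phi unfolding orbit_def by auto
  show "stabilizer G \<phi> (h a) = stabilizer G \<psi> a" if "a \<in> A" for a
  proof -
    have "h (\<psi> g a) = h a \<longleftrightarrow> \<psi> g a = a" if "g \<in> carrier G" for g
      using inj element_image[OF that \<open>a \<in> A\<close>] \<open>a \<in> A\<close> inj_onD by metis
    then show ?thesis using phi[OF that] unfolding stabilizer_def by auto
  qed
qed

lemma (in group) rc_closed:
  assumes "subgroup H G" "C \<in> rcosets H" "x \<in> carrier G"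
  shows "C #> x \<in> rcosets H" "C \<subseteq> carrier G"
proof -
  obtain a where a: "a \<in> carrier G" "C = H #> a" using assms(2) unfolding RCOSETS_def by auto
  have Hs: "H \<subseteq> carrier G" using assms(1) subgroup.subset by blast
  have "C #> x = H #> (a \<otimes> x)" using a Hs assms(3) coset_mult_assoc by simp
  then show "C #> x \<in> rcosets H" using rcosetsI Hs a assms(3) by simp
  show "C \<subseteq> carrier G" using a Hs r_coset_subset_G by simp
qed

lemma coset_gset0:
  fixes G :: "('a, 'b) monoid_scheme" (structure)
  assumes grp: "group G" and fin: "finite (carrier G)" and H1: "subgroup H1 G" and H2: "subgroup H2 G"
  shows "\<exists>(T :: (bool \<times> 'a set) set) \<psi> t1 t2. group_action G T \<psi> \<and> finite T \<and> t1 \<in> T \<and> t2 \<in> T \<and>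
     T = orbit G \<psi> t1 \<union> orbit G \<psi> t2 \<and> orbit G \<psi> t1 \<inter> orbit G \<psi> t2 = {} \<and>
     stabilizer G \<psi> t1 = H1 \<and> stabilizer G \<psi> t2 = H2"
proof -
  interpret group G by (rule grp)
  define T where "T = ({True} \<times> rcosets H1) \<union> ({False} \<times> rcosets H2)"
  define \<psi> where "\<psi> = (\<lambda>g. \<lambda>p \<in> T. (fst p, snd p #> inv g))"
  have Tcl: "(b, C #> x) \<in> T" if "(b, C) \<in> T" "x \<in> carrier G" for b C x
    using that rc_closed[OF H1] rc_closed[OF H2] unfolding T_def by auto
  have Tsub: "C \<subseteq> carrier G" if "(b, C) \<in> T" for b C
    using that rc_closed[OF H1] rc_closed[OF H2] one_closed unfolding T_def by blast
  have ga: "group_action G T \<psi>"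
  proof (rule group_actionI[OF grp])
    fix g assume "g \<in> carrier G" then show "\<psi> g \<in> extensional T" unfolding \<psi>_def by simp
  next
    fix g x assume "g \<in> carrier G" "x \<in> T"
    then show "\<psi> g x \<in> T" unfolding \<psi>_def using Tcl[of "fst x" "snd x" "inv g"] by auto
  next
    fix g k x assume g: "g \<in> carrier G" and k: "k \<in> carrier G" and x: "x \<in> T"
    have x': "(fst x, snd x) \<in> T" using x by simp
    have "(fst x, snd x #> inv k) \<in> T" using Tcl[OF x'] k by simp
    moreover have "snd x #> inv (g \<otimes> k) = (snd x #> inv k) #> inv g"
      using g k Tsub[OF x'] by (simp add: inv_mult_group coset_mult_assoc)
    ultimately show "\<psi> (g \<otimes> k) x = \<psi> g (\<psi> k x)" unfolding \<psi>_def using x g k by simp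
  next
    fix x assume x: "x \<in> T"
    then show "\<psi> \<one> x = x" unfolding \<psi>_def using Tsub[of "fst x" "snd x"] by simp
  qed
  have H1s: "H1 \<subseteq> carrier G" and H2s: "H2 \<subseteq> carrier G" using H1 H2 subgroup.subset by blast+
  have H1r: "H1 \<in> rcosets H1" using rcosetsI[OF H1s one_closed] H1s by simp
  have H2r: "H2 \<in> rcosets H2" using rcosetsI[OF H2s one_closed] H2s by simp
  have t1: "(True, H1) \<in> T" and t2: "(False, H2) \<in> T" using H1r H2r T_def by auto
  have orb: "orbit G \<psi> (b, H) = {b} \<times> rcosets H" if "(b, H) \<in> T" "subgroup H G" for b H
  proof
    have Hs: "H \<subseteq> carrier G" using that subgroup.subset by blast
    show "orbit G \<psi> (b, H) \<subseteq> {b} \<times> rcosets H"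
      using that Hs unfolding orbit_def \<psi>_def by (auto intro: rcosetsI)
    show "{b} \<times> rcosets H \<subseteq> orbit G \<psi> (b, H)"
    proof
      fix p assume "p \<in> {b} \<times> rcosets H"
      then obtain a where a: "a \<in> carrier G" "p = (b, H #> a)" unfolding RCOSETS_def by auto
      have "\<psi> (inv a) (b, H) = p" using a that unfolding \<psi>_def by simp
      then show "p \<in> orbit G \<psi> (b, H)" using a unfolding orbit_def by blast
    qed
  qed
  have stab: "stabilizer G \<psi> (b, H) = H" if "(b, H) \<in> T" "subgroup H G" for b H
  proof
    have Hs: "H \<subseteq> carrier G" using that subgroup.subset by blast
    show "stabilizer G \<psi> (b, H) \<subseteq> H"
    proof
      fix g assume "g \<in> stabilizer G \<psi> (b, H)"
      then have g: "g \<in> carrier G" "H #> inv g = H" using that unfolding stabilizer_def \<psi>_def by auto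
      then have "inv g \<in> H" using rcos_self[of "inv g" H] that by auto
      then show "g \<in> H" using g subgroup.m_inv_closed[OF that(2)] by fastforce
    qed
    show "H \<subseteq> stabilizer G \<psi> (b, H)"
    proof
      fix g assume g: "g \<in> H"
      then have "H #> inv g = H" using subgroup.rcos_const[OF that(2) grp] subgroup.m_inv_closed[OF that(2)] by blast
      then show "g \<in> stabilizer G \<psi> (b, H)" using g Hs that unfolding stabilizer_def \<psi>_def by auto
    qed
  qed
  have finT: "finite T"
  proof -
    have "rcosets H \<subseteq> Pow (carrier G)" if "subgroup H G" for H
      using rc_closed[OF that] one_closed by blast
    then have "finite (rcosets H1)" "finite (rcosets H2)" using fin H1 H2 by (meson finite_Pow_iff finite_subset)+
    then show ?thesis unfolding T_def by simp
  qed
  have U: "T = orbit G \<psi> (True, H1) \<union> orbit G \<psi> (False, H2)"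
    using orb[OF t1 H1] orb[OF t2 H2] T_def by simp
  have D: "orbit G \<psi> (True, H1) \<inter> orbit G \<psi> (False, H2) = {}"
    using orb[OF t1 H1] orb[OF t2 H2] by auto
  show ?thesis
    apply (rule exI[of _ T], rule exI[of _ \<psi>], rule exI[of _ "(True, H1)"], rule exI[of _ "(False, H2)"])
    apply (intro conjI)
           apply (rule ga)
          apply (rule finT)
         apply (rule t1)
        apply (rule t2)
       apply (rule U)
      apply (rule D)
     apply (rule stab[OF t1 H1])
    apply (rule stab[OF t2 H2])
    done
qed

lemma coset_gset:
  fixes G :: "('a, 'b) monoid_scheme" (structure)
  assumes grp: "group G" and fin: "finite (carrier G)" and H1: "subgroup H1 G" and H2: "subgroup H2 G"
  shows "\<exists>(M :: nat set) \<phi> m1 m2. group_action G M \<phi> \<and> finite M \<and> m1 \<in> M \<and> m2 \<in> M \<and>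
     M = orbit G \<phi> m1 \<union> orbit G \<phi> m2 \<and> orbit G \<phi> m1 \<inter> orbit G \<phi> m2 = {} \<and>
     stabilizer G \<phi> m1 = H1 \<and> stabilizer G \<phi> m2 = H2"
proof -
  obtain T :: "(bool \<times> 'a set) set" and \<psi> t1 t2 where T: "group_action G T \<psi>" "finite T" "t1 \<in> T" "t2 \<in> T"
     "T = orbit G \<psi> t1 \<union> orbit G \<psi> t2" "orbit G \<psi> t1 \<inter> orbit G \<psi> t2 = {}"
     "stabilizer G \<psi> t1 = H1" "stabilizer G \<psi> t2 = H2"
    using coset_gset0[OF grp fin H1 H2] by blast
  obtain h :: "bool \<times> 'a set \<Rightarrow> nat" and n where h: "inj_on h T" using finite_imp_inj_to_nat_seg[OF T(2)] by blast
  define \<phi> where "\<phi> = (\<lambda>g. (\<lambda>y \<in> h ` T. h (\<psi> g (the_inv_into T h y))))"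
  note tr = transport_gset[OF grp T(1) h, folded \<phi>_def]
  have sub1: "orbit G \<psi> t1 \<subseteq> T" and sub2: "orbit G \<psi> t2 \<subseteq> T" using T(5) by auto
  have M: "h ` T = orbit G \<phi> (h t1) \<union> orbit G \<phi> (h t2)"
    using tr(2)[OF T(3)] tr(2)[OF T(4)] T(5) by (metis image_Un)
  have D: "orbit G \<phi> (h t1) \<inter> orbit G \<phi> (h t2) = {}"
    using tr(2)[OF T(3)] tr(2)[OF T(4)] inj_on_image_Int[OF h sub1 sub2] T(6) by simp
  have S: "stabilizer G \<phi> (h t1) = H1" "stabilizer G \<phi> (h t2) = H2"
    using tr(3)[OF T(3)] tr(3)[OF T(4)] T(7,8) by simp_all
  have F: "finite (h ` T)" using T(2) by simp
  show ?thesis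
    apply (rule exI[of _ "h ` T"], rule exI[of _ \<phi>], rule exI[of _ "h t1"], rule exI[of _ "h t2"])
    apply (intro conjI)
           apply (rule tr(1))
          apply (rule F)
         apply (simp add: T(3))
        apply (simp add: T(4))
       apply (rule M)
      apply (rule D)
     apply (rule S(1))
    apply (rule S(2))
    done
qed

theorem proposition3p15:
  fixes G :: "('a, 'b) monoid_scheme" and \<alpha> :: nat
  assumes "group G" and "finite (carrier G)"
  shows
    "(\<forall>(M :: 'm set) \<phi> N.
        near_group_nimrep G \<alpha> M \<phi> N \<and> nimrep_irreducible G M \<phi> N \<and> card (orbits G M \<phi>) = 2 \<longrightarrow>
        (\<forall>m1\<in>M. \<forall>m2\<in>M. orbit G \<phi> m1 \<noteq> orbit G \<phi> m2 \<longrightarrow>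
           subgroup (stabilizer G \<phi> m1) G \<and> subgroup (stabilizer G \<phi> m2) G \<and>
           two_orbit_conditions G \<alpha> (stabilizer G \<phi> m1) (stabilizer G \<phi> m2) (N m1 m1) (N m2 m2) \<and>
           two_orbit_X_action G \<phi> N m1 m2 (N m1 m1) (N m2 m2)))
     \<and>
     (\<forall>H1 H2 c11 c22. subgroup H1 G \<and> subgroup H2 G \<and> two_orbit_conditions G \<alpha> H1 H2 c11 c22 \<longrightarrow>
        (\<exists>(M :: nat set) \<phi> N m1 m2.
           near_group_nimrep G \<alpha> M \<phi> N \<and> nimrep_irreducible G M \<phi> N \<and> card (orbits G M \<phi>) = 2 \<and>
           m1 \<in> M \<and> m2 \<in> M \<and> orbit G \<phi> m1 \<noteq> orbit G \<phi> m2 \<and>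
           stabilizer G \<phi> m1 = H1 \<and> stabilizer G \<phi> m2 = H2 \<and>
           N m1 m1 = c11 \<and> N m2 m2 = c22 \<and>
           two_orbit_X_action G \<phi> N m1 m2 c11 c22))"
  proof (rule conjI)
  show "\<forall>(M :: 'm set) \<phi> N.
        near_group_nimrep G \<alpha> M \<phi> N \<and> nimrep_irreducible G M \<phi> N \<and> card (orbits G M \<phi>) = 2 \<longrightarrow>
        (\<forall>m1\<in>M. \<forall>m2\<in>M. orbit G \<phi> m1 \<noteq> orbit G \<phi> m2 \<longrightarrow>
           subgroup (stabilizer G \<phi> m1) G \<and> subgroup (stabilizer G \<phi> m2) G \<and>
           two_orbit_conditions G \<alpha> (stabilizer G \<phi> m1) (stabilizer G \<phi> m2) (N m1 m1) (N m2 m2) \<and>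
           two_orbit_X_action G \<phi> N m1 m2 (N m1 m1) (N m2 m2))"
  proof (intro allI impI ballI)
    fix M :: "'m set" and \<phi> N m1 m2
    assume A: "near_group_nimrep G \<alpha> M \<phi> N \<and> nimrep_irreducible G M \<phi> N \<and> card (orbits G M \<phi>) = 2"
      and m1: "m1 \<in> M" and m2: "m2 \<in> M" and neq: "orbit G \<phi> m1 \<noteq> orbit G \<phi> m2"
    show "subgroup (stabilizer G \<phi> m1) G \<and> subgroup (stabilizer G \<phi> m2) G \<and>
           two_orbit_conditions G \<alpha> (stabilizer G \<phi> m1) (stabilizer G \<phi> m2) (N m1 m1) (N m2 m2) \<and>
           two_orbit_X_action G \<phi> N m1 m2 (N m1 m1) (N m2 m2)"
      using forward[OF assms(1,2) _ _ _ m1 m2 neq] A by blast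
  qed
next
  show "\<forall>H1 H2 c11 c22. subgroup H1 G \<and> subgroup H2 G \<and> two_orbit_conditions G \<alpha> H1 H2 c11 c22 \<longrightarrow>
        (\<exists>(M :: nat set) \<phi> N m1 m2.
           near_group_nimrep G \<alpha> M \<phi> N \<and> nimrep_irreducible G M \<phi> N \<and> card (orbits G M \<phi>) = 2 \<and>
           m1 \<in> M \<and> m2 \<in> M \<and> orbit G \<phi> m1 \<noteq> orbit G \<phi> m2 \<and>
           stabilizer G \<phi> m1 = H1 \<and> stabilizer G \<phi> m2 = H2 \<and>
           N m1 m1 = c11 \<and> N m2 m2 = c22 \<and>
           two_orbit_X_action G \<phi> N m1 m2 c11 c22)"
  proof (intro allI impI)
    fix H1 H2 c11 c22
    assume A: "subgroup H1 G \<and> subgroup H2 G \<and> two_orbit_conditions G \<alpha> H1 H2 c11 c22"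
    obtain M :: "nat set" and \<phi> m1 m2 where S: "group_action G M \<phi>" "finite M" "m1 \<in> M" "m2 \<in> M"
      "M = orbit G \<phi> m1 \<union> orbit G \<phi> m2" "orbit G \<phi> m1 \<inter> orbit G \<phi> m2 = {}"
      "stabilizer G \<phi> m1 = H1" "stabilizer G \<phi> m2 = H2"
      using coset_gset[OF assms(1,2)] A by blast
    have cond: "two_orbit_conditions G \<alpha> (stabilizer G \<phi> m1) (stabilizer G \<phi> m2) c11 c22"
      using A S(7,8) by simp
    obtain N where N: "near_group_nimrep G \<alpha> M \<phi> N" "nimrep_irreducible G M \<phi> N"
      "card (orbits G M \<phi>) = 2" "orbit G \<phi> m1 \<noteq> orbit G \<phi> m2" "N m1 m1 = c11" "N m2 m2 = c22"
      using backward[OF assms(1,2) S(1-6) cond] by blast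
    have X: "two_orbit_X_action G \<phi> N m1 m2 c11 c22"
      using forward[OF assms(1,2) N(1-3) S(3,4) N(4)] N(5,6) by simp
    show "\<exists>(M :: nat set) \<phi> N m1 m2.
           near_group_nimrep G \<alpha> M \<phi> N \<and> nimrep_irreducible G M \<phi> N \<and> card (orbits G M \<phi>) = 2 \<and>
           m1 \<in> M \<and> m2 \<in> M \<and> orbit G \<phi> m1 \<noteq> orbit G \<phi> m2 \<and>
           stabilizer G \<phi> m1 = H1 \<and> stabilizer G \<phi> m2 = H2 \<and>
           N m1 m1 = c11 \<and> N m2 m2 = c22 \<and>
           two_orbit_X_action G \<phi> N m1 m2 c11 c22"
      apply (rule exI[of _ M], rule exI[of _ \<phi>], rule exI[of _ N], rule exI[of _ m1], rule exI[of _ m2])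
      using N S(3,4,7,8) X by simp
  qed
qed

end
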